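(* For every agent $i\in[n]$, every price $p>0$, every ordering $\pi$ of $[n]$, and every $\beta>0$, \[ \mathbb{E}_{\mathbf v\sim\mathcal F}[u_i(\mathbf v,p,\pi)]\;\ge\;\beta\Big(\mathbb{E}_{\mathbf v\sim\mathcal F}[v_i(x_i(\mathbf v))]-p\,\mathbb{E}_{\mathbf v\sim\mathcal F}[x_i(\mathbf v)]\Big)\cdot\Big(1-e^{-1/\beta}-\int_0^{1-e^{-1/\beta}}\Pr_{\mathbf v\sim\mathcal F}\Big[\sum_{j\in B_\pi(i)}y^*_j(v_j,p)\ge t\Big]\,dt\Big), \] where $B_\pi(i)$ is the set of agents that act before $i$ in $\pi$.
   Context: There are $n$ agents, identified with $[n]=\{1,\dots,n\}$, and one perfectly divisible item of size $1$. Each agent $i$ has a valuation function $v_i:[0,1]\to\mathbb{R}_{\ge0}$ that is non-decreasing and concave; $v_i$ is drawn from a publicly known distribution $\mathcal F_i$ over such functions, independently across agents, and $\mathbf v=(v_1,\dots,v_n)\sim\mathcal F=\mathcal F_1\times\cdots\times\mathcal F_n$. All expectations below are assumed finite. Sequential posted pricing with linear pricing uses a price $p>0$ per unit and an ordering $\pi$ (a permutation of $[n]$): agents act one at a time in the order $\pi$; when agent $i$ acts she may buy any fraction of the still-unallocated part of the item, paying $p$ per unit, and her utility from buying a fraction $z$ is $v_i(z)-pz$. For each agent $i$ and price $p$, $y^*_i(v_i,p)\in[0,1]$ denotes a maximizer of $z\mapsto v_i(z)-pz$ over $[0,1]$ (a fixed measurable selection), i.e. the fraction she would buy if she were alone.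 For an agent $i$, let $B_\pi(i)$ be the set of agents acting before $i$ in $\pi$. The fraction agent $i$ actually buys is $y_i(\mathbf v,p,\pi)=\min\{y^*_i(v_i,p),\max\{0,1-\sum_{j\in B_\pi(i)}y^*_j(v_j,p)\}\}$ (by concavity this maximizes her utility over the available amount); hence $\sum_{j\in[n]}y_j(\mathbf v,p,\pi)=\min\{1,\sum_{j\in[n]}y^*_j(v_j,p)\}$. Her utility is $u_i(\mathbf v,p,\pi)=v_i(y_i(\mathbf v,p,\pi))-p\,y_i(\mathbf v,p,\pi)$. $x(\mathbf v)=(x_1(\mathbf v),\dots,x_n(\mathbf v))$ denotes a (measurably selected) welfare-maximizing allocation: $x_i(\mathbf v)\ge0$, $\sum_i x_i(\mathbf v)=1$, maximizing $\sum_i v_i(x_i)$. *)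

theory Defs
  imports "HOL-Probability.Probability"
begin

text \<open>Agents are 0, ..., n-1. A valuation is a function real to real, meaningful on [0,1].\<close>

definition valuation :: "(real \<Rightarrow> real) \<Rightarrow> bool" where
  "valuation v \<longleftrightarrow> mono_on {0..1} v \<and> concave_on {0..1} v \<and> (\<forall>z\<in>{0..1}. 0 \<le> v z)"

text \<open>An ordering: pi permutes the agents, pi i is the position at which agent i acts.\<close>
definition before :: "nat \<Rightarrow> (nat \<Rightarrow> nat) \<Rightarrow> nat \<Rightarrow> nat set" where
  "before n \<pi> i = {j \<in> {..<n}. \<pi> j < \<pi> i}"

definition is_demand :: "(real \<Rightarrow> real) \<Rightarrow> real \<Rightarrow> real \<Rightarrow> bool" where
  "is_demand v p y \<longleftrightarrow> y \<in> {0..1} \<and> (\<forall>z\<in>{0..1}. v z - p * z \<le> v y - p * y)"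

definition bought ::
  "nat \<Rightarrow> (nat \<Rightarrow> (real \<Rightarrow> real) \<Rightarrow> real \<Rightarrow> real) \<Rightarrow> (nat \<Rightarrow> real \<Rightarrow> real)
     \<Rightarrow> real \<Rightarrow> (nat \<Rightarrow> nat) \<Rightarrow> nat \<Rightarrow> real" where
  "bought n ystar v p \<pi> i =
     min (ystar i (v i) p) (max 0 (1 - (\<Sum>j\<in>before n \<pi> i. ystar j (v j) p)))"

definition utility ::
  "nat \<Rightarrow> (nat \<Rightarrow> (real \<Rightarrow> real) \<Rightarrow> real \<Rightarrow> real) \<Rightarrow> (nat \<Rightarrow> real \<Rightarrow> real)
     \<Rightarrow> real \<Rightarrow> (nat \<Rightarrow> nat) \<Rightarrow> nat \<Rightarrow> real" where
  "utility n ystar v p \<pi> i =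
     v i (bought n ystar v p \<pi> i) - p * bought n ystar v p \<pi> i"

definition welfare_opt :: "nat \<Rightarrow> (nat \<Rightarrow> real \<Rightarrow> real) \<Rightarrow> (nat \<Rightarrow> real) \<Rightarrow> bool" where
  "welfare_opt n v x \<longleftrightarrow>
     (\<forall>i<n. 0 \<le> x i) \<and> (\<Sum>i<n. x i) = 1 \<and>
     (\<forall>z. (\<forall>i<n. 0 \<le> z i) \<and> (\<Sum>i<n. z i) = 1 \<longrightarrow> (\<Sum>i<n. v i (z i)) \<le> (\<Sum>i<n. v i (x i)))"

end

theory Submission imports Defs begin

lemma util_lb:
  assumes w: "valuation w" and d: "is_demand w p y" and a0: "0 \<le> a" and a1: "a \<le> 1"
  shows "a * (w y - p*y) \<le> w (min y a) - p * min y a"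
proof -
  have y: "0 \<le> y" "y \<le> 1" and opt: "\<And>z. z \<in> {0..1} \<Longrightarrow> w z - p*z \<le> w y - p*y"
    using d unfolding is_demand_def by auto
  have w0: "0 \<le> w 0" using w unfolding valuation_def by auto
  have gy: "0 \<le> w y - p*y" using opt[of 0] w0 by simp
  show ?thesis
  proof (cases "y \<le> a")
    case True
    then have "min y a = y" by simp
    moreover have "a * (w y - p*y) \<le> w y - p*y" using mult_right_mono[OF a1 gy] by simp
    ultimately show ?thesis by simp
  next
    case False
    then have ypos: "0 < y" using a0 by simp
    define t where "t = a / y"
    have t0: "0 \<le> t" "t \<le> 1" using a0 False ypos by (auto simp: t_def)
    have cc: "concave_on {0..1} w" using w unfolding valuation_def by auto
    have "(1 - t) * w 0 + t * w y \<le> w ((1 - t) *\<^sub>R 0 + t *\<^sub>R y)"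
      by (rule concave_onD[OF cc]) (use t0 y in auto)
    moreover have "(1 - t) *\<^sub>R 0 + t *\<^sub>R y = a" using ypos by (simp add: t_def)
    ultimately have e: "(1 - t) * w 0 + t * w y \<le> w a" by simp
    have "0 \<le> (1 - t) * w 0" using t0 w0 by simp
    with e have wa: "t * w y \<le> w a" by linarith
    have ta: "a \<le> t" using ypos y a0 unfolding t_def by (simp add: le_divide_eq mult_left_le)
    have "a * (w y - p*y) \<le> t * (w y - p*y)" using ta gy by (simp add: mult_right_mono)
    also have "\<dots> = t * w y - p * a" using ypos by (simp add: t_def algebra_simps)
    also have "\<dots> \<le> w a - p * a" using wa by simp
    finally show ?thesis using False by simp
  qed
qed

definition Dq :: "real set" where "Dq = \<rat> \<inter> {0..1}"

lemma Dq_ne: "0 \<in> Dq" "1 \<in> Dq" by (auto simp: Dq_def)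

lemma sup_bdd:
  assumes d: "is_demand w p y"
  shows "bdd_above ((\<lambda>q. w q - p*q) ` Dq)"
  by (rule bdd_aboveI2[where M="w y - p*y"]) (use d in \<open>auto simp: is_demand_def Dq_def\<close>)

lemma sup_le:
  assumes d: "is_demand w p y"
  shows "(SUP q\<in>Dq. w q - p*q) \<le> w y - p*y"
  using d Dq_ne unfolding is_demand_def Dq_def by (intro cSUP_least) auto

lemma sup_ge:
  assumes w: "valuation w" and d: "is_demand w p y" and z: "z \<in> {0..1}"
  shows "w z - p*z \<le> (SUP q\<in>Dq. w q - p*q)"
proof (cases "z \<in> \<rat>")
  case True
  then show ?thesis using z by (intro cSUP_upper sup_bdd[OF d]) (auto simp: Dq_def)
next
  case False
  have z0: "z \<noteq> 0" "z \<noteq> 1" using False by auto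
  with z have zo: "z \<in> {0<..<1}" by auto
  have cc: "concave_on {0<..<1} w" using w unfolding valuation_def
    unfolding concave_on_def by (auto intro!: convex_on_subset[where T="{0..1}"])
  hence "continuous_on {0<..<1} (\<lambda>x. - w x)" unfolding concave_on_def
    by (intro convex_on_continuous) auto
  hence "continuous_on {0<..<1} w"
    using continuous_on_minus by force
  hence "isCont w z" using zo continuous_on_eq_continuous_at[of "{0<..<1}" w] by simp
  hence ic: "isCont (\<lambda>q. w q - p*q) z" by (intro continuous_intros)
  define D' where "D' = (\<rat> :: real set) \<inter> {0<..<1}"
  have lim: "((\<lambda>q. w q - p*q) \<longlongrightarrow> w z - p*z) (at z within D')"
    by (rule tendsto_within_subset[OF ic[unfolded isCont_def]]) simp
  have nt: "\<not> trivial_limit (at z within D')"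
    unfolding trivial_limit_within islimpt_approachable_real not_not
  proof (intro allI impI)
    fix e :: real assume e: "e > 0"
    obtain r where r: "r \<in> \<rat>" "max 0 (z - e) < r" "r < z"
      using Rats_dense_in_real[of "max 0 (z - e)" z] zo e by auto
    then show "\<exists>x'\<in>D'. x' \<noteq> z \<and> \<bar>x' - z\<bar> < e" using zo
      by (intro bexI[of _ r]) (auto simp: D'_def)
  qed
  have ev: "eventually (\<lambda>q. w q - p*q \<le> (SUP q\<in>Dq. w q - p*q)) (at z within D')"
    unfolding eventually_at_filter
  proof (rule always_eventually, intro allI impI)
    fix q assume "q \<in> D'"
    then have "q \<in> Dq" by (auto simp: D'_def Dq_def)
    then show "w q - p*q \<le> (SUP q\<in>Dq. w q - p*q)" by (rule cSUP_upper[OF _ sup_bdd[OF d]])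
  qed
  show ?thesis by (rule tendsto_upperbound[OF lim ev nt])
qed

lemma indep_nn:
  fixes F :: "nat \<Rightarrow> 'a measure" and A :: "(nat \<Rightarrow> 'a) \<Rightarrow> real" and H :: "'a \<Rightarrow> real"
  assumes P: "\<And>j. j \<in> insert i I \<Longrightarrow> prob_space (F j)" and fin: "finite I" and iI: "i \<notin> I"
   and A: "A \<in> borel_measurable (PiM (insert i I) F)" and A2: "A \<in> borel_measurable (PiM I F)" and A0: "\<And>x. 0 \<le> A x"
   and H: "H \<in> borel_measurable (F i)" and H0: "\<And>y. 0 \<le> H y"
   and Ai: "\<And>x y. A (x(i:=y)) = A x"
  shows "(\<integral>\<^sup>+ x. ennreal (A x * H (x i)) \<partial>PiM (insert i I) F)
       = (\<integral>\<^sup>+ x. ennreal (A x) \<partial>PiM (insert i I) F) * (\<integral>\<^sup>+ y. ennreal (H y) \<partial>F i)"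
proof -
  define F' where "F' j = (if j \<in> insert i I then F j else count_space {undefined})" for j
  interpret F': prob_space "F' j" for j
    using P by (cases "j \<in> insert i I") (auto intro!: prob_spaceI simp: F'_def)
  interpret product_prob_space F' by unfold_locales
  have eq: "PiM (insert i I) F = PiM (insert i I) F'" by (rule PiM_cong) (auto simp: F'_def)
  have eq2: "PiM I F = PiM I F'" by (rule PiM_cong) (auto simp: F'_def)
  have A2': "A \<in> borel_measurable (PiM I F')" using A2 eq2 by simp
  have Fi: "F' i = F i" by (simp add: F'_def)
  have A'[measurable]: "A \<in> borel_measurable (PiM (insert i I) F')" using A eq by simp
  have H': "H \<in> borel_measurable (F' i)" using H Fi by simp
  have Hx[measurable]: "(\<lambda>x. H (x i)) \<in> borel_measurable (PiM (insert i I) F')"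
    using measurable_compose[OF measurable_component_singleton[of i "insert i I" F'] H'] by simp
  have "(\<integral>\<^sup>+ x. ennreal (A x * H (x i)) \<partial>PiM (insert i I) F')
     = (\<integral>\<^sup>+ x. (\<integral>\<^sup>+ y. ennreal (A (x(i:=y)) * H ((x(i:=y)) i)) \<partial>F' i) \<partial>PiM I F')"
    by (rule product_nn_integral_insert[OF fin iI]) measurable
  also have "\<dots> = (\<integral>\<^sup>+ x. ennreal (A x) * (\<integral>\<^sup>+ y. ennreal (H y) \<partial>F' i) \<partial>PiM I F')"
    by (rule nn_integral_cong, subst nn_integral_cmult[symmetric])
       (use H' in \<open>auto simp: Ai ennreal_mult A0 H0 intro!: nn_integral_cong\<close>)
  also have "\<dots> = (\<integral>\<^sup>+ x. ennreal (A x) \<partial>PiM I F') * (\<integral>\<^sup>+ y. ennreal (H y) \<partial>F' i)"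
    by (rule nn_integral_multc) (use A2' in \<open>measurable\<close>)
  finally have 1: "(\<integral>\<^sup>+ x. ennreal (A x * H (x i)) \<partial>PiM (insert i I) F')
     = (\<integral>\<^sup>+ x. ennreal (A x) \<partial>PiM I F') * (\<integral>\<^sup>+ y. ennreal (H y) \<partial>F' i)" .
  have "(\<integral>\<^sup>+ x. ennreal (A x) \<partial>PiM (insert i I) F')
     = (\<integral>\<^sup>+ x. (\<integral>\<^sup>+ y. ennreal (A (x(i:=y))) \<partial>F' i) \<partial>PiM I F')"
    by (rule product_nn_integral_insert[OF fin iI]) measurable
  also have "\<dots> = (\<integral>\<^sup>+ x. ennreal (A x) \<partial>PiM I F')"
    by (rule nn_integral_cong) (simp add: Ai F'.emeasure_space_1)
  finally have 2: "(\<integral>\<^sup>+ x. ennreal (A x) \<partial>PiM (insert i I) F') = (\<integral>\<^sup>+ x. ennreal (A x) \<partial>PiM I F')" .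
  show ?thesis using 1 2 eq Fi by simp
qed
lemma layer:
  fixes M :: "'a measure" and S :: "'a \<Rightarrow> real"
  assumes PM: "prob_space M" and S[measurable]: "S \<in> borel_measurable M"
    and S0: "\<And>v. v \<in> space M \<Longrightarrow> 0 \<le> S v" and c0: "0 \<le> c"
  shows "(LBINT t:{0..c}. measure M {v \<in> space M. S v \<ge> t}) = (\<integral>v. min c (S v) \<partial>M)"
proof -
  interpret prob_space M by (rule PM)
  interpret pr: pair_sigma_finite lborel M
    by (intro pair_sigma_finite.intro lborel.sigma_finite_measure_axioms prob_space_imp_sigma_finite PM)
  define P where "P t = measure M {v \<in> space M. S v \<ge> t}" for t
  have Pmono: "P t' \<le> P t" if "t \<le> t'" for t t'
    unfolding P_def using that by (intro finite_measure_mono) auto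
  have "mono (\<lambda>t. - P t)" by (auto intro!: monoI simp: Pmono)
  hence "(\<lambda>t. - P t) \<in> borel_measurable borel" by (rule borel_measurable_mono)
  hence "(\<lambda>t. - (- P t)) \<in> borel_measurable borel" by measurable
  hence Pm[measurable]: "P \<in> borel_measurable borel" by simp
  define f where "f t v = (if 0 \<le> t \<and> t \<le> c \<and> t \<le> S v then 1 else 0 :: ennreal)" for t v
  have fm: "case_prod f \<in> borel_measurable (lborel \<Otimes>\<^sub>M M)"
    unfolding f_def by measurable
  have inner1: "(\<integral>\<^sup>+ v. f t v \<partial>M) = ennreal (indicator {0..c} t * P t)" for t
  proof (cases "0 \<le> t \<and> t \<le> c")
    case True
    have "(\<integral>\<^sup>+ v. f t v \<partial>M) = (\<integral>\<^sup>+ v. indicator {v \<in> space M. S v \<ge> t} v \<partial>M)"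
      by (rule nn_integral_cong) (use True in \<open>auto simp: f_def indicator_def\<close>)
    also have "\<dots> = emeasure M {v \<in> space M. S v \<ge> t}" by (rule nn_integral_indicator) measurable
    also have "\<dots> = ennreal (P t)" by (simp add: P_def emeasure_eq_measure)
    finally show ?thesis using True by simp
  next
    case False
    then show ?thesis by (auto simp: f_def)
  qed
  have inner2: "(\<integral>\<^sup>+ t. f t v \<partial>lborel) = ennreal (min c (S v))" if v: "v \<in> space M" for v
  proof -
    have "(\<integral>\<^sup>+ t. f t v \<partial>lborel) = (\<integral>\<^sup>+ t. indicator {0..min c (S v)} t \<partial>lborel)"
      by (rule nn_integral_cong) (auto simp: f_def indicator_def)
    also have "\<dots> = ennreal (min c (S v))" using S0[OF v] c0 by simp
    finally show ?thesis .
  qed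
  have "(\<integral>\<^sup>+ t. ennreal (indicator {0..c} t * P t) \<partial>lborel) = (\<integral>\<^sup>+ t. (\<integral>\<^sup>+ v. f t v \<partial>M) \<partial>lborel)"
    by (simp add: inner1)
  also have "\<dots> = (\<integral>\<^sup>+ v. (\<integral>\<^sup>+ t. f t v \<partial>lborel) \<partial>M)"
    by (rule pr.Fubini'[OF fm, symmetric])
  also have "\<dots> = (\<integral>\<^sup>+ v. ennreal (min c (S v)) \<partial>M)"
    by (rule nn_integral_cong) (simp add: inner2)
  also have "\<dots> = ennreal (\<integral>v. min c (S v) \<partial>M)"
  proof (rule nn_integral_eq_integral)
    show "integrable M (\<lambda>v. min c (S v))"
      by (rule integrable_const_bound[where B=c]) (use S0 c0 in auto)
  qed (use S0 c0 in auto)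
  finally have nn: "(\<integral>\<^sup>+ t. ennreal (indicator {0..c} t * P t) \<partial>lborel) = ennreal (\<integral>v. min c (S v) \<partial>M)" .
  have "(LBINT t:{0..c}. P t) = (\<integral>t. indicator {0..c} t * P t \<partial>lborel)"
    by (simp add: set_lebesgue_integral_def)
  also have "\<dots> = enn2real (\<integral>\<^sup>+ t. ennreal (indicator {0..c} t * P t) \<partial>lborel)"
    by (rule integral_eq_nn_integral) (auto simp: P_def)
  also have "\<dots> = (\<integral>v. min c (S v) \<partial>M)"
    using nn by (simp add: integral_nonneg_AE S0 c0)
  finally show ?thesis by (simp add: P_def)
qed

lemma pw_ineq:
  fixes s c \<beta> :: real
  assumes s: "0 \<le> s" and c0: "0 \<le> c" and c1: "c \<le> 1" and bc: "\<beta> * c \<le> 1" and b: "0 < \<beta>"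
  shows "\<beta> * (c - min c s) \<le> max 0 (1 - s)"
proof (cases "c \<le> s")
  case True then show ?thesis by simp
next
  case False
  hence cs: "0 \<le> c - s" by simp
  show ?thesis
  proof (cases "1 \<le> \<beta>")
    case True
    have "s \<le> \<beta> * s" using True s by (simp add: mult_right_mono[of 1 \<beta> s, simplified])
    then show ?thesis using False bc by (simp add: right_diff_distrib)
  next
    case False': False
    have "\<beta> * (c - s) \<le> 1 * (c - s)" using False' cs by (intro mult_right_mono) auto
    hence "\<beta> * (c - s) \<le> c - s" by simp
    then have "\<beta> * (c - s) \<le> 1 - s" using c1 by linarith
    then show ?thesis using False by simp
  qed
qed

theorem mainTheorem1:
  fixes n :: nat
    and F :: "nat \<Rightarrow> (real \<Rightarrow> real) measure"
    and ystar :: "nat \<Rightarrow> (real \<Rightarrow> real) \<Rightarrow> real \<Rightarrow> real"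
    and x :: "(nat \<Rightarrow> real \<Rightarrow> real) \<Rightarrow> nat \<Rightarrow> real"
    and i :: nat and p :: real and \<pi> :: "nat \<Rightarrow> nat" and \<beta> :: real
  defines "M \<equiv> PiM {..<n} F"
  assumes F_prob: "\<And>j. j < n \<Longrightarrow> prob_space (F j)"
    and F_val: "\<And>j w. j < n \<Longrightarrow> w \<in> space (F j) \<Longrightarrow> valuation w"
    and F_eval: "\<And>j z. j < n \<Longrightarrow> (\<lambda>w. w z) \<in> borel_measurable (F j)"
    and ystar_opt: "\<And>j w q. j < n \<Longrightarrow> w \<in> space (F j) \<Longrightarrow> q > 0 \<Longrightarrow> is_demand w q (ystar j w q)"
    and ystar_meas: "\<And>j q. j < n \<Longrightarrow> q > 0 \<Longrightarrow> (\<lambda>w. ystar j w q) \<in> borel_measurable (F j)"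
    and x_opt: "\<And>v. v \<in> space M \<Longrightarrow> welfare_opt n v (x v)"
    and x_meas: "\<And>j. j < n \<Longrightarrow> (\<lambda>v. x v j) \<in> borel_measurable M"
    and x_int: "\<And>j. j < n \<Longrightarrow> integrable M (\<lambda>v. v j (x v j))"
    and u_int: "integrable M (\<lambda>v. utility n ystar v p \<pi> i)"
    and i: "i < n" and p: "p > 0" and \<pi>: "\<pi> permutes {..<n}" and \<beta>: "\<beta> > 0"
  shows "(\<integral>v. utility n ystar v p \<pi> i \<partial>M)
    \<ge> \<beta> * ((\<integral>v. v i (x v i) \<partial>M) - p * (\<integral>v. x v i \<partial>M))
        * (1 - exp (-1/\<beta>)
           - (LBINT t:{0..1 - exp (-1/\<beta>)}.
                measure M {v \<in> space M. (\<Sum>j\<in>before n \<pi> i. ystar j (v j) p) \<ge> t}))"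
proof -
  define B where "B = before n \<pi> i"
  define I where "I = {..<n} - {i}"
  have iI: "i \<notin> I" and finI: "finite I" and insI: "insert i I = {..<n}"
    using i by (auto simp: I_def)
  have BI: "B \<subseteq> I" and Bn: "B \<subseteq> {..<n}" by (auto simp: B_def before_def I_def)
  have PM: "prob_space M" unfolding M_def by (rule prob_space_PiM) (auto intro: F_prob)
  interpret prob_space M by (rule PM)
  have spM: "v j \<in> space (F j)" if "v \<in> space M" "j < n" for v j
    using that by (auto simp: M_def space_PiM PiE_def)
  define S where "S v = (\<Sum>j\<in>B. ystar j (v j) p)" for v :: "nat \<Rightarrow> real \<Rightarrow> real"
  have Smeas: "S \<in> borel_measurable (PiM K F)" if "B \<subseteq> K" for K
    unfolding S_def
  proof (rule borel_measurable_sum)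
    fix j assume j: "j \<in> B"
    with that Bn have "j \<in> K" "j < n" by auto
    then show "(\<lambda>v. ystar j (v j) p) \<in> borel_measurable (PiM K F)"
      using measurable_compose[OF measurable_component_singleton[of j K F] ystar_meas[OF _ p]] by simp
  qed
  have SM: "S \<in> borel_measurable M" unfolding M_def by (rule Smeas) (use Bn in auto)
  have S0: "0 \<le> S v" if "v \<in> space M" for v
    unfolding S_def
  proof (rule sum_nonneg)
    fix j assume "j \<in> B"
    then have j: "j < n" using Bn by auto
    show "0 \<le> ystar j (v j) p" using ystar_opt[OF j spM[OF that j] p] by (simp add: is_demand_def)
  qed
  define a where "a v = max 0 (1 - S v)" for v
  define hf where "hf w = (SUP q\<in>Dq. w q - p*q)" for w :: "real \<Rightarrow> real"
  define H where "H w = max 0 (hf w)" for w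
  have hfm: "hf \<in> borel_measurable (F i)" unfolding hf_def
  proof (rule borel_measurable_cSUP)
    show "countable Dq" unfolding Dq_def by (rule countable_subset[OF _ countable_rat]) auto
    show "(\<lambda>w. w q - p * q) \<in> borel_measurable (F i)" for q
      using F_eval[OF i, of q] by measurable
    show "bdd_above ((\<lambda>q. w q - p * q) ` Dq)" if "w \<in> space (F i)" for w
      by (rule sup_bdd[OF ystar_opt[OF i that p]])
  qed
  have Hm: "H \<in> borel_measurable (F i)" unfolding H_def using hfm by measurable
  have xi: "0 \<le> x v i" "x v i \<le> 1" if v: "v \<in> space M" for v
  proof -
    have wo: "welfare_opt n v (x v)" by (rule x_opt[OF v])
    then show "0 \<le> x v i" using i by (auto simp: welfare_opt_def)
    have "x v i \<le> (\<Sum>j<n. x v j)" using wo i by (intro member_le_sum) (auto simp: welfare_opt_def)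
    then show "x v i \<le> 1" using wo by (simp add: welfare_opt_def)
  qed
  have ulb: "a v * H (v i) \<le> utility n ystar v p \<pi> i" if v: "v \<in> space M" for v
  proof -
    let ?w = "v i" and ?y = "ystar i (v i) p"
    have val: "valuation ?w" using F_val[OF i spM[OF v i]] .
    have dem: "is_demand ?w p ?y" using ystar_opt[OF i spM[OF v i] p] .
    have a01: "0 \<le> a v" "a v \<le> 1" using S0[OF v] by (auto simp: a_def)
    have w00: "0 \<le> ?w 0" using val by (simp add: valuation_def)
    have H: "H ?w = hf ?w"
      using sup_ge[OF val dem, of 0] w00 unfolding H_def hf_def by auto
    have "a v * H ?w \<le> a v * (?w ?y - p * ?y)"
      using sup_le[OF dem] a01 H unfolding hf_def by (simp add: mult_left_mono)
    also have "\<dots> \<le> ?w (min ?y (a v)) - p * min ?y (a v)" by (rule util_lb[OF val dem a01])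
    also have "\<dots> = utility n ystar v p \<pi> i"
      by (simp add: utility_def bought_def a_def S_def B_def)
    finally show ?thesis .
  qed
  have Hge: "max 0 (v i (x v i) - p * x v i) \<le> H (v i)" if v: "v \<in> space M" for v
  proof -
    have val: "valuation (v i)" using F_val[OF i spM[OF v i]] .
    have dem: "is_demand (v i) p (ystar i (v i) p)" using ystar_opt[OF i spM[OF v i] p] .
    show ?thesis using sup_ge[OF val dem, of "x v i"] xi[OF v] unfolding H_def hf_def by auto
  qed
  have H0: "0 \<le> H w" for w by (simp add: H_def)
  have a0: "0 \<le> a v" for v by (simp add: a_def)
  have Ai: "a (v(i:=y)) = a v" for v y
  proof -
    have "(\<Sum>j\<in>B. ystar j ((v(i:=y)) j) p) = (\<Sum>j\<in>B. ystar j (v j) p)"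
      by (rule sum.cong) (use BI iI in auto)
    then show ?thesis unfolding a_def S_def by simp
  qed
  have am: "a \<in> borel_measurable (PiM K F)" if "B \<subseteq> K" for K
    unfolding a_def using Smeas[OF that] by measurable
  have aM: "a \<in> borel_measurable M" unfolding M_def by (rule am) (use Bn in auto)
  have ind1: "(\<integral>\<^sup>+ v. ennreal (a v * H (v i)) \<partial>M) = (\<integral>\<^sup>+ v. ennreal (a v) \<partial>M) * (\<integral>\<^sup>+ w. ennreal (H w) \<partial>F i)"
    unfolding M_def insI[symmetric]
  proof (rule indep_nn[where A=a and H=H])
    show "a \<in> borel_measurable (PiM (insert i I) F)" using am[of "insert i I"] BI by auto
    show "a \<in> borel_measurable (PiM I F)" using am[OF BI] .
  qed (use F_prob insI finI iI a0 Hm H0 Ai in auto)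
  have ind2: "(\<integral>\<^sup>+ v. ennreal (1 * H (v i)) \<partial>M) = (\<integral>\<^sup>+ v. ennreal 1 \<partial>M) * (\<integral>\<^sup>+ w. ennreal (H w) \<partial>F i)"
    unfolding M_def insI[symmetric]
    by (rule indep_nn[where A="\<lambda>_. 1" and H=H]) (use F_prob insI finI iI Hm H0 in auto)
  have ind3: "(\<integral>\<^sup>+ v. ennreal (H (v i)) \<partial>M) = (\<integral>\<^sup>+ w. ennreal (H w) \<partial>F i)"
    using ind2 by (simp add: emeasure_space_1)
  define c where "c = 1 - exp (-1/\<beta>)"
  have c0: "0 \<le> c" using \<beta> by (simp add: c_def)
  have c1: "c \<le> 1" by (simp add: c_def)
  have "1 + (-1/\<beta>) \<le> exp (-1/\<beta>)" by (rule exp_ge_add_one_self)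
  hence "c \<le> 1/\<beta>" by (simp add: c_def)
  hence bc: "\<beta> * c \<le> 1" using \<beta> by (simp add: field_simps)
  have Leq: "(LBINT t:{0..c}. measure M {v \<in> space M. (\<Sum>j\<in>before n \<pi> i. ystar j (v j) p) \<ge> t})
      = (\<integral>v. min c (S v) \<partial>M)"
    using layer[OF PM SM S0 c0] by (simp add: S_def B_def)
  have intmin: "integrable M (\<lambda>v. min c (S v))"
    by (rule integrable_const_bound[where B=c]) (use S0 c0 SM in auto)
  have inta: "integrable M a"
    by (rule integrable_const_bound[where B=1]) (use S0 aM in \<open>auto simp: a_def\<close>)
  have intx: "integrable M (\<lambda>v. x v i)"
    by (rule integrable_const_bound[where B=1]) (use xi x_meas[OF i] in auto)
  have intg: "integrable M (\<lambda>v. v i (x v i) - p * x v i)"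
    using x_int[OF i] intx by auto
  have intgp: "integrable M (\<lambda>v. max 0 (v i (x v i) - p * x v i))"
    using intg by auto
  define G where "G = (\<integral>v. v i (x v i) \<partial>M) - p * (\<integral>v. x v i \<partial>M)"
  have G: "G = (\<integral>v. v i (x v i) - p * x v i \<partial>M)"
    unfolding G_def using x_int[OF i] intx by simp
  define Gp where "Gp = (\<integral>v. max 0 (v i (x v i) - p * x v i) \<partial>M)"
  have GGp: "G \<le> Gp" unfolding G Gp_def by (rule integral_mono[OF intg intgp]) auto
  have Gp0: "0 \<le> Gp" unfolding Gp_def by (rule integral_nonneg_AE) auto
  define Ea where "Ea = (\<integral>v. a v \<partial>M)"
  define Eu where "Eu = (\<integral>v. utility n ystar v p \<pi> i \<partial>M)"
  have u0: "0 \<le> utility n ystar v p \<pi> i" if "v \<in> space M" for v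
    using ulb[OF that] a0[of v] H0[of "v i"] by (smt (verit) mult_nonneg_nonneg)
  have Eu0: "0 \<le> Eu" unfolding Eu_def by (rule integral_nonneg_AE) (use u0 in auto)
  define L where "L = (\<integral>v. min c (S v) \<partial>M)"
  have cL: "(\<integral>v. c - min c (S v) \<partial>M) = c - L"
    unfolding L_def using intmin by (simp add: integral_diff prob_space)
  have "(\<integral>v. \<beta> * (c - min c (S v)) \<partial>M) = \<beta> * (c - L)"
    by (simp only: integral_mult_right_zero cL)
  moreover have "(\<integral>v. \<beta> * (c - min c (S v)) \<partial>M) \<le> Ea"
    unfolding Ea_def
    by (rule integral_mono) (use intmin inta S0 c0 c1 bc \<beta> pw_ineq in \<open>auto simp: a_def\<close>)
  ultimately have KEa: "\<beta> * (c - L) \<le> Ea" by linarith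
  have "L \<le> (\<integral>v. c \<partial>M)" unfolding L_def by (rule integral_mono) (use intmin in auto)
  hence K0: "0 \<le> \<beta> * (c - L)" using \<beta> by (simp add: prob_space)
  have "ennreal Eu = (\<integral>\<^sup>+ v. ennreal (utility n ystar v p \<pi> i) \<partial>M)"
    unfolding Eu_def by (rule nn_integral_eq_integral[symmetric, OF u_int]) (use u0 in auto)
  also have "\<dots> \<ge> (\<integral>\<^sup>+ v. ennreal (a v * H (v i)) \<partial>M)"
    by (rule nn_integral_mono) (use ulb in \<open>auto intro!: ennreal_leI\<close>)
  finally have 1: "(\<integral>\<^sup>+ v. ennreal (a v * H (v i)) \<partial>M) \<le> ennreal Eu" .
  have "(\<integral>\<^sup>+ v. ennreal (a v) \<partial>M) = ennreal Ea"
    unfolding Ea_def by (rule nn_integral_eq_integral[OF inta]) (use a0 in auto)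
  with ind1 ind3 have 2: "(\<integral>\<^sup>+ v. ennreal (a v * H (v i)) \<partial>M) = ennreal Ea * (\<integral>\<^sup>+ v. ennreal (H (v i)) \<partial>M)"
    by simp
  have "ennreal Gp = (\<integral>\<^sup>+ v. ennreal (max 0 (v i (x v i) - p * x v i)) \<partial>M)"
    unfolding Gp_def by (rule nn_integral_eq_integral[symmetric, OF intgp]) auto
  also have "\<dots> \<le> (\<integral>\<^sup>+ v. ennreal (H (v i)) \<partial>M)"
    by (rule nn_integral_mono) (use Hge in \<open>auto intro!: ennreal_leI\<close>)
  finally have 3: "ennreal Gp \<le> (\<integral>\<^sup>+ v. ennreal (H (v i)) \<partial>M)" .
  have Ea0: "0 \<le> Ea" using K0 KEa by linarith
  have "ennreal (Ea * Gp) = ennreal Ea * ennreal Gp" using Gp0 Ea0 by (simp add: ennreal_mult)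
  also have "\<dots> \<le> ennreal Ea * (\<integral>\<^sup>+ v. ennreal (H (v i)) \<partial>M)" using 3 by (rule mult_left_mono) simp
  also have "\<dots> \<le> ennreal Eu" using 1 2 by simp
  finally have EaGp: "Ea * Gp \<le> Eu" using Eu0 by simp
  show ?thesis
  proof (cases "0 \<le> G")
    case True
    have "\<beta> * G * (c - L) = G * (\<beta> * (c - L))" by simp
    also have "\<dots> \<le> Gp * Ea" using True GGp KEa K0 by (intro mult_mono) auto
    also have "\<dots> \<le> Eu" using EaGp by (simp add: mult.commute)
    finally show ?thesis unfolding Eu_def G_def[symmetric] c_def[symmetric] Leq L_def[symmetric] .
  next
    case False
    have "\<beta> * G * (c - L) = G * (\<beta> * (c - L))" by simp
    also have "\<dots> \<le> 0" using False K0 by (simp add: mult_nonpos_nonneg)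
    also have "\<dots> \<le> Eu" by (rule Eu0)
    finally show ?thesis unfolding Eu_def G_def[symmetric] c_def[symmetric] Leq L_def[symmetric] .
  qed
qed

end
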